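(* Let $\tau$ be a renewal process on $\mathbb N$ with $\tau_0=0$ on $(\Sigma,\mathcal E,\mathbf P)$, $\delta_n=\mathbf 1_{\{n\in\tau\}}$, and let $\eta=(\eta_k)_{k\in\mathbb N}$ be i.i.d. real random variables on $(\Omega,\mathcal F,\mathbb P)$. Fix $\beta>0$, $h\in\mathbb R$, assume $\mathbb E e^{\beta|\eta_0|}<\infty$, and let $\lambda(s)=\ln\mathbb E e^{s\eta_0}$. Let $n\ge1$ with $\mathbf P(n\in\tau)>0$ and $Z_n=\mathbf E\big[\exp\big(\sum_{k=1}^n(\beta\eta_k+h)\delta_k\big)\delta_n\big]$. Let $\mathcal F_0$ be the trivial $\sigma$-field, $\mathcal F_j=\sigma(\eta_i:1\le i\le j)$, $\mathbb E_j=\mathbb E(\cdot\mid\mathcal F_j)$, and $V_{n,j}=\mathbb E_j\ln Z_n-\mathbb E_{j-1}\ln Z_n$. Then for every $1\le j\le n$, $$\mathbb E_{j-1}\exp(|V_{n,j}|)\le K:=2\max(e^{h+\lambda(\beta)},1)\cdot\max(e^{-h+\lambda(-\beta)},1)\quad\text{a.s.}$$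
   Context: $\mathbf E$ is expectation with respect to $\mathbf P$ (renewal process, disorder fixed), $\mathbb E$ with respect to $\mathbb P$ (disorder). *)

theory Defs
  imports "HOL-Probability.Probability"
begin

text \<open>Renewal process: tau = set of partial sums of the i.i.d. inter-arrival times T i
  (values in enat, so that a defective/terminating renewal is allowed); tau_0 = 0
  corresponds to the empty partial sum. delta_n = indicator of n in tau.\<close>

definition renewal_delta :: "(nat \<Rightarrow> 's \<Rightarrow> enat) \<Rightarrow> nat \<Rightarrow> 's \<Rightarrow> real" where
  "renewal_delta T n \<sigma> = (if \<exists>m. (\<Sum>i<m. T i \<sigma>) = enat n then 1 else 0)"

definition partition_fn ::
  "'s measure \<Rightarrow> (nat \<Rightarrow> 's \<Rightarrow> enat) \<Rightarrow> (nat \<Rightarrow> 'w \<Rightarrow> real) \<Rightarrow> real \<Rightarrow> real \<Rightarrow> nat \<Rightarrow> 'w \<Rightarrow> real" where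
  "partition_fn P T \<eta> \<beta> h n \<omega> =
     (\<integral>\<sigma>. exp (\<Sum>k\<in>{1..n}. (\<beta> * \<eta> k \<omega> + h) * renewal_delta T k \<sigma>) * renewal_delta T n \<sigma> \<partial>P)"

definition disorder_filtration :: "'w measure \<Rightarrow> (nat \<Rightarrow> 'w \<Rightarrow> real) \<Rightarrow> nat \<Rightarrow> 'w measure" where
  "disorder_filtration Q \<eta> j =
     sigma (space Q) {\<eta> i -` A \<inter> space Q | i A. i \<in> {1..j} \<and> A \<in> sets borel}"

definition log_mgf :: "'w measure \<Rightarrow> ('w \<Rightarrow> real) \<Rightarrow> real \<Rightarrow> real" where
  "log_mgf Q X s = ln (\<integral>\<omega>. exp (s * X \<omega>) \<partial>Q)"

end

theory Submission
  imports Defs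
begin


locale dis = prob_space Q for Q :: "'w measure" +
  fixes \<eta> :: "nat \<Rightarrow> 'w \<Rightarrow> real"
  assumes ind: "indep_vars (\<lambda>_. borel) \<eta> UNIV"
    and ident: "\<And>i. distr Q borel (\<eta> i) = distr Q borel (\<eta> 0)"
begin

definition "\<mu> = distr Q borel (\<eta> 0)"
abbreviation "MM S \<equiv> PiM S (\<lambda>_::nat. \<mu>)"
definition "YY S = (\<lambda>\<omega>. \<lambda>i\<in>S. \<eta> i \<omega>)"

lemma eta_meas[measurable]: "\<eta> i \<in> borel_measurable Q"
  using ind unfolding indep_vars_def by auto

lemma sets_mu[simp, measurable_cong]: "sets \<mu> = sets borel" and space_mu[simp]: "space \<mu> = UNIV"
  by (auto simp: \<mu>_def)

lemma YY_meas1: "YY S \<in> measurable Q (MM S)"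
  unfolding YY_def by (rule measurable_restrict) measurable
lemma L1: "indep_vars (\<lambda>_. borel) \<eta> S" using ind by (rule indep_vars_subset) simp
lemma distr_eta: "distr Q borel (\<eta> i) = \<mu>"
  using ident by (simp add: \<mu>_def)
lemma A2: "S \<noteq> {} \<Longrightarrow> distr Q (PiM S (\<lambda>_. borel)) (\<lambda>x. \<lambda>i\<in>S. \<eta> i x) = PiM S (\<lambda>i. distr Q borel (\<eta> i))"
    using iffD1[OF indep_vars_iff_distr_eq_PiM[where M'="\<lambda>_. borel" and X=\<eta> and I=S] L1] by (simp only: eta_meas not_False_eq_True)
lemma A3: "PiM S (\<lambda>i. distr Q borel (\<eta> i)) = MM S"
    by (rule PiM_cong) (simp_all add: distr_eta)
lemma A4: "distr Q (PiM S (\<lambda>_. borel)) (\<lambda>x. \<lambda>i\<in>S. \<eta> i x) = distr Q (MM S) (YY S)"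
    apply (rule distr_cong) apply simp apply (rule sets_PiM_cong) apply simp apply simp
    apply (simp add: YY_def) done

lemma prob_mu: "prob_space \<mu>"
  unfolding \<mu>_def by (rule prob_space_distr) simp

sublocale PS: product_sigma_finite "\<lambda>_::nat. \<mu>"
  unfolding product_sigma_finite_def using prob_mu prob_space_imp_sigma_finite by blast

lemma PP: "product_prob_space (\<lambda>_::nat. \<mu>)"
  by (simp add: product_prob_space_def product_prob_space_axioms_def prob_mu PS.product_sigma_finite_axioms)

lemma prob_MM: "prob_space (MM S)"
proof -
  interpret product_prob_space "\<lambda>_::nat. \<mu>" S using PP .
  show ?thesis by (rule P.prob_space_axioms)
qed

lemma distr_YY_ne: "S \<noteq> {} \<Longrightarrow> distr Q (MM S) (YY S) = MM S"
  using A2 A3 A4 by simp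

lemma distr_YY:
  assumes S: "finite S"
  shows "distr Q (MM S) (YY S) = MM S"
proof -
  interpret product_prob_space "\<lambda>_::nat. \<mu>" S using PP .
  let ?N = "insert 0 S"
  have "MM S = distr (MM ?N) (MM S) (\<lambda>f. restrict f S)"
    using S by (intro distr_restrict) auto
  also have "\<dots> = distr (distr Q (MM ?N) (YY ?N)) (MM S) (\<lambda>f. restrict f S)"
    by (subst distr_YY_ne) auto
  also have "\<dots> = distr Q (MM S) ((\<lambda>f. restrict f S) \<circ> YY ?N)"
    by (rule distr_distr) (auto intro: measurable_restrict_subset YY_meas1)
  also have "\<dots> = distr Q (MM S) (YY S)"
    by (rule distr_cong) (auto simp: YY_def fun_eq_iff)
  finally show ?thesis by simp
qed

abbreviation "FF j \<equiv> disorder_filtration Q \<eta> j"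

lemma T1: "i \<in> I \<Longrightarrow> \<eta> i -` A \<inter> space Q = YY I -` {f\<in>\<Pi>\<^sub>E i\<in>I. space \<mu>. f i \<in> A} \<inter> space Q"
  unfolding YY_def by auto
lemma T2: "YY I \<in> space Q \<rightarrow> (\<Pi>\<^sub>E i\<in>I. space \<mu>)"
  unfolding YY_def by auto

lemma sets_FF: "sets (FF j) = {YY {1..j} -` S \<inter> space Q | S. S \<in> sets (MM {1..j})}"
proof -
  let ?I = "{1..j}"
  let ?G = "{\<eta> i -` A \<inter> space Q | i A. i \<in> {1..j} \<and> A \<in> sets borel}"
  let ?R = "{{f\<in>\<Pi>\<^sub>E i\<in>?I. space \<mu>. f i \<in> A} | i A. i \<in> ?I \<and> A \<in> sets \<mu>}"
  have G: "?G \<subseteq> Pow (space Q)" by auto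
  have 1: "sets (FF j) = sigma_sets (space Q) ?G"
    unfolding disorder_filtration_def using G by (rule sets_measure_of)
  have 2: "?G = {YY ?I -` A \<inter> space Q |A. A \<in> ?R}"
  proof (intro set_eqI iffI)
    fix X assume "X \<in> ?G"
    then obtain i A where X: "X = \<eta> i -` A \<inter> space Q" "i \<in> ?I" "A \<in> sets borel" by blast
    have "{f\<in>\<Pi>\<^sub>E i\<in>?I. space \<mu>. f i \<in> A} \<in> ?R" using X(2,3) by auto
    moreover have "X = YY ?I -` {f\<in>\<Pi>\<^sub>E i\<in>?I. space \<mu>. f i \<in> A} \<inter> space Q"
      using X(1) T1[OF X(2)] by simp
    ultimately show "X \<in> {YY ?I -` A \<inter> space Q |A. A \<in> ?R}" by blast
  next
    fix X assume "X \<in> {YY ?I -` A \<inter> space Q |A. A \<in> ?R}"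
    then obtain i A where X: "X = YY ?I -` {f\<in>\<Pi>\<^sub>E i\<in>?I. space \<mu>. f i \<in> A} \<inter> space Q" "i \<in> ?I" "A \<in> sets \<mu>"
      by blast
    have "X = \<eta> i -` A \<inter> space Q"
      using X(1) T1[OF X(2)] by simp
    then show "X \<in> ?G" using X(2,3) by auto
  qed
  have 3: "sigma_sets (space Q) {YY ?I -` A \<inter> space Q |A. A \<in> ?R} = {YY ?I -` A \<inter> space Q |A. A \<in> sigma_sets (\<Pi>\<^sub>E i\<in>?I. space \<mu>) ?R}"
    by (rule sigma_sets_vimage_commute[symmetric, OF T2])
  have 4: "sigma_sets (\<Pi>\<^sub>E i\<in>?I. space \<mu>) ?R = sets (MM ?I)"
    by (rule sets_PiM_single[symmetric])
  show ?thesis unfolding 1 2 3 4 ..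
qed

lemma space_FF[simp]: "space (FF j) = space Q"
  unfolding disorder_filtration_def by (rule space_measure_of) auto

lemma YY_meas_FF: "YY {1..j} \<in> measurable (FF j) (MM {1..j})"
  unfolding measurable_def using measurable_space[OF YY_meas1] by (auto simp: sets_FF)

lemma subalg_FF: "subalgebra Q (FF j)"
  unfolding subalgebra_def using measurable_sets[OF YY_meas1] by (auto simp: sets_FF)

lemma fms_FF: "finite_measure_subalgebra Q (FF j)"
  unfolding finite_measure_subalgebra_def finite_measure_subalgebra_axioms_def
  using subalg_FF finite_measure_axioms by blast

lemma condexp:
  assumes jn: "j \<le> n" and g: "integrable (MM {1..n}) g"
  shows "AE \<omega> in Q. real_cond_exp Q (FF j) (\<lambda>\<omega>. g (YY {1..n} \<omega>)) \<omega> =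
           (\<integral>y. g (merge {1..j} {Suc j..n} (YY {1..j} \<omega>, y)) \<partial>MM {Suc j..n})"
proof -
  define I where "I = {1..j}"
  define J where "J = {Suc j..n}"
  define N where "N = {1..n}"
  have IJ: "I \<union> J = N" using jn by (auto simp: I_def J_def N_def)
  have disj: "I \<inter> J = {}" by (auto simp: I_def J_def)
  have fin: "finite I" "finite J" "finite N" by (auto simp: I_def J_def N_def)
  have IN: "I \<subseteq> N" using IJ by auto
  interpret finite_measure_subalgebra Q "FF j" by (rule fms_FF)
  interpret PIJ: pair_sigma_finite "MM I" "MM J"
    by (intro pair_sigma_finite.intro prob_space_imp_sigma_finite prob_MM)
  define h where "h x = (\<integral>y. g (merge I J (x, y)) \<partial>MM J)" for x
  have gN: "integrable (MM N) g" using g by (simp add: N_def)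
  have gm[measurable]: "g \<in> borel_measurable (MM N)" using gN by auto
  have gmerge: "integrable (MM I \<Otimes>\<^sub>M MM J) (\<lambda>z. g (merge I J z))"
    by (rule integrable_distr[OF measurable_merge]) (subst PS.distr_merge[OF disj fin(1,2)], simp add: IJ gN)
  have h_int: "integrable (MM I) h"
    unfolding h_def using PIJ.integrable_fst'[OF gmerge] by simp
  have h_meas[measurable]: "h \<in> borel_measurable (MM I)" using h_int by auto
  have dN: "distr Q (MM N) (YY N) = MM N" by (rule distr_YY[OF fin(3)])
  have dI: "distr Q (MM I) (YY I) = MM I" by (rule distr_YY[OF fin(1)])
  have int1: "integrable Q (\<lambda>\<omega>. g (YY N \<omega>))"
    using gN by (subst (asm) dN[symmetric]) (simp add: integrable_distr_eq YY_meas1)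
  have int2: "integrable Q (\<lambda>\<omega>. h (YY I \<omega>))"
    using h_int by (subst (asm) dI[symmetric]) (simp add: integrable_distr_eq YY_meas1)
  have meas2: "(\<lambda>\<omega>. h (YY I \<omega>)) \<in> borel_measurable (FF j)"
    using measurable_compose[OF YY_meas_FF[of j] h_meas[unfolded I_def]] by (simp add: I_def)
  have "AE \<omega> in Q. real_cond_exp Q (FF j) (\<lambda>\<omega>. g (YY N \<omega>)) \<omega> = h (YY I \<omega>)"
  proof (rule real_cond_exp_charact[OF _ int1 int2 meas2])
    fix A assume "A \<in> sets (FF j)"
    then obtain S where S: "S \<in> sets (MM I)" and A: "A = YY I -` S \<inter> space Q"
      unfolding sets_FF I_def by blast
    define G2 where "G2 x = indicator S (restrict x I) * g x" for x
    have G2m[measurable]: "G2 \<in> borel_measurable (MM N)"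
      unfolding G2_def using measurable_restrict_subset[OF IN] S by measurable
    have G2int: "integrable (MM N) G2"
      by (rule Bochner_Integration.integrable_bound[OF gN G2m]) (auto simp: G2_def indicator_def)
    have rYY: "restrict (YY N \<omega>) I = YY I \<omega>" for \<omega>
      using IN by (auto simp: YY_def fun_eq_iff)
    have "(\<integral>\<omega>\<in>A. g (YY N \<omega>) \<partial>Q) = (\<integral>\<omega>. G2 (YY N \<omega>) \<partial>Q)"
      unfolding set_lebesgue_integral_def
      by (rule Bochner_Integration.integral_cong) (auto simp: A G2_def rYY indicator_def)
    also have "\<dots> = (\<integral>x. G2 x \<partial>MM N)"
      by (subst dN[symmetric]) (simp add: integral_distr YY_meas1)
    also have "\<dots> = (\<integral>x. (\<integral>y. G2 (merge I J (x, y)) \<partial>MM J) \<partial>MM I)"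
      using PS.product_integral_fold[OF disj fin(1,2)] G2int IJ by simp
    also have "\<dots> = (\<integral>x. indicator S x * h x \<partial>MM I)"
    proof (rule Bochner_Integration.integral_cong[OF refl])
      fix x assume x: "x \<in> space (MM I)"
      have "restrict (merge I J (x, y)) I = x" for y
        using x disj by (auto simp: space_PiM PiE_def extensional_def fun_eq_iff merge_def)
      then show "(\<integral>y. G2 (merge I J (x, y)) \<partial>MM J) = indicator S x * h x"
        by (simp add: G2_def h_def)
    qed
    also have "\<dots> = (\<integral>\<omega>. indicator S (YY I \<omega>) * h (YY I \<omega>) \<partial>Q)"
      using S by (subst dI[symmetric]) (simp add: integral_distr YY_meas1)
    also have "\<dots> = (\<integral>\<omega>\<in>A. h (YY I \<omega>) \<partial>Q)"
      unfolding set_lebesgue_integral_def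
      by (rule Bochner_Integration.integral_cong) (auto simp: A indicator_def)
    finally show "(\<integral>\<omega>\<in>A. g (YY N \<omega>) \<partial>Q) = (\<integral>\<omega>\<in>A. h (YY I \<omega>) \<partial>Q)" .
  qed
  then show ?thesis by (simp add: h_def I_def J_def N_def)
qed
end



locale poly = prob_space P for P :: "'s measure" +
  fixes T :: "nat \<Rightarrow> 's \<Rightarrow> enat" and \<beta> h :: real and n :: nat
  assumes Tm[measurable]: "\<And>i. T i \<in> measurable P (count_space UNIV)"
    and beta: "\<beta> > 0" and n1: "n \<ge> 1"
    and pos: "measure P {\<sigma> \<in> space P. renewal_delta T n \<sigma> = 1} > 0"
begin

lemma Ssum_meas[measurable]: "(\<lambda>\<sigma>. \<Sum>i<m. T i \<sigma>) \<in> measurable P (count_space UNIV)"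
proof (induction m)
  case 0 then show ?case by simp
next
  case (Suc m)
  have "(\<lambda>\<sigma>. (\<lambda>a. a + T m \<sigma>) (\<Sum>i<m. T i \<sigma>)) \<in> measurable P (count_space UNIV)"
  proof (rule measurable_compose_countable[OF _ Suc])
    fix a :: enat
    show "(\<lambda>\<sigma>. a + T m \<sigma>) \<in> measurable P (count_space UNIV)"
      using measurable_compose[OF Tm[of m] measurable_count_space[of "\<lambda>b. a + b"]] by simp
  qed
  then show ?case by simp
qed

lemma delta_meas[measurable]: "renewal_delta T k \<in> borel_measurable P"
proof -
  have "Measurable.pred P (\<lambda>\<sigma>. \<exists>m. (\<Sum>i<m. T i \<sigma>) = enat k)"
    by measurable
  then show ?thesis unfolding renewal_delta_def[abs_def] by measurable
qed

lemma delta01: "renewal_delta T k \<sigma> = 0 \<or> renewal_delta T k \<sigma> = 1"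
  by (simp add: renewal_delta_def)

lemma delta_ge0[simp]: "renewal_delta T k \<sigma> \<ge> 0" and delta_le1[simp]: "renewal_delta T k \<sigma> \<le> 1"
  by (simp_all add: renewal_delta_def)

definition "W x \<sigma> = exp (\<Sum>k\<in>{1..n}. (\<beta> * x k + h) * renewal_delta T k \<sigma>) * renewal_delta T n \<sigma>"
definition "Zf x = (\<integral>\<sigma>. W x \<sigma> \<partial>P)"
definition "L x = ln (Zf x)"
definition "cc x = (\<Sum>k\<in>{1..n}. \<bar>\<beta> * x k + h\<bar>)"
definition "pp = measure P {\<sigma> \<in> space P. renewal_delta T n \<sigma> = 1}"

lemma W_meas[measurable]: "W x \<in> borel_measurable P"
  unfolding W_def by measurable

lemma W_ge0: "W x \<sigma> \<ge> 0" by (simp add: W_def)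

lemma sum_le_cc: "(\<Sum>k\<in>{1..n}. (\<beta> * x k + h) * renewal_delta T k \<sigma>) \<le> cc x"
  unfolding cc_def
proof (rule sum_mono)
  fix k
  have "(\<beta> * x k + h) * renewal_delta T k \<sigma> \<le> \<bar>(\<beta> * x k + h) * renewal_delta T k \<sigma>\<bar>" by simp
  also have "\<dots> \<le> \<bar>\<beta> * x k + h\<bar>" using delta01[of k \<sigma>] by auto
  finally show "(\<beta> * x k + h) * renewal_delta T k \<sigma> \<le> \<bar>\<beta> * x k + h\<bar>" .
qed

lemma sum_ge_cc: "(\<Sum>k\<in>{1..n}. (\<beta> * x k + h) * renewal_delta T k \<sigma>) \<ge> - cc x"
  unfolding cc_def sum_negf[symmetric]
proof (rule sum_mono)
  fix k
  have "- \<bar>\<beta> * x k + h\<bar> \<le> - \<bar>(\<beta> * x k + h) * renewal_delta T k \<sigma>\<bar>" using delta01[of k \<sigma>] by auto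
  also have "\<dots> \<le> (\<beta> * x k + h) * renewal_delta T k \<sigma>" by simp
  finally show "- \<bar>\<beta> * x k + h\<bar> \<le> (\<beta> * x k + h) * renewal_delta T k \<sigma>" .
qed

lemma W_le: "W x \<sigma> \<le> exp (cc x)"
proof -
  have "W x \<sigma> \<le> exp (\<Sum>k\<in>{1..n}. (\<beta> * x k + h) * renewal_delta T k \<sigma>) * 1"
    unfolding W_def by (rule mult_left_mono) auto
  also have "\<dots> \<le> exp (cc x)" using sum_le_cc by simp
  finally show ?thesis .
qed

lemma W_ge: "W x \<sigma> \<ge> exp (- cc x) * renewal_delta T n \<sigma>"
  unfolding W_def by (rule mult_right_mono) (use sum_ge_cc in auto)

lemma W_int: "integrable P (W x)"
  by (rule integrable_const_bound[where B="exp (cc x)"]) (auto simp: W_ge0 W_le)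

lemma delta_int: "integrable P (renewal_delta T k)"
  by (rule integrable_const_bound[where B=1]) auto

lemma pp_eq: "(\<integral>\<sigma>. renewal_delta T n \<sigma> \<partial>P) = pp"
proof -
  have "(\<integral>\<sigma>. renewal_delta T n \<sigma> \<partial>P) = (\<integral>\<sigma>. indicator {\<sigma> \<in> space P. renewal_delta T n \<sigma> = 1} \<sigma> \<partial>P)"
    by (rule Bochner_Integration.integral_cong) (auto simp: indicator_def renewal_delta_def)
  also have "\<dots> = pp" unfolding pp_def by simp
  finally show ?thesis .
qed

lemma pp_pos: "pp > 0" using pos by (simp add: pp_def)
lemma pp_le1: "pp \<le> 1" unfolding pp_def by simp

lemma Zf_ge: "Zf x \<ge> exp (- cc x) * pp"
proof -
  have "exp (- cc x) * pp = (\<integral>\<sigma>. exp (- cc x) * renewal_delta T n \<sigma> \<partial>P)"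
    by (simp add: pp_eq)
  also have "\<dots> \<le> Zf x" unfolding Zf_def
    by (rule integral_mono) (auto simp: W_int W_ge delta_int)
  finally show ?thesis .
qed

lemma Zf_pos: "Zf x > 0"
proof -
  have "0 < exp (- cc x) * pp" using pp_pos by simp
  then show ?thesis using Zf_ge[of x] by linarith
qed

lemma Zf_le: "Zf x \<le> exp (cc x)"
proof -
  have "Zf x \<le> (\<integral>\<sigma>. exp (cc x) \<partial>P)" unfolding Zf_def
    by (rule integral_mono) (auto simp: W_int W_le)
  then show ?thesis by (simp add: prob_space)
qed

lemma L_abs: "\<bar>L x\<bar> \<le> cc x - ln pp"
proof -
  have "ln (Zf x) \<le> ln (exp (cc x))" using Zf_le[of x] Zf_pos[of x] by (subst ln_le_cancel_iff) auto
  then have up: "L x \<le> cc x" unfolding L_def by simp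
  have "ln (exp (- cc x) * pp) \<le> L x" unfolding L_def
    using Zf_ge[of x] pp_pos Zf_pos[of x] by (subst ln_le_cancel_iff) auto
  then have lo: "- cc x + ln pp \<le> L x" using pp_pos by (simp add: ln_mult)
  have "ln pp \<le> 0" using pp_pos pp_le1 by simp
  then show ?thesis using up lo by linarith
qed

lemma cc_le: "cc x \<le> (\<Sum>k\<in>{1..n}. \<beta> * \<bar>x k\<bar> + \<bar>h\<bar>)"
  unfolding cc_def by (rule sum_mono) (use beta in \<open>auto simp: abs_mult intro: order_trans[OF abs_triangle_ineq]\<close>)

lemma L_local: "(\<And>k. k \<in> {1..n} \<Longrightarrow> x k = x' k) \<Longrightarrow> L x = L x'"
proof -
  assume "\<And>k. k \<in> {1..n} \<Longrightarrow> x k = x' k"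
  then have "W x = W x'" unfolding W_def by (auto simp: fun_eq_iff intro!: sum.cong)
  then show ?thesis unfolding L_def Zf_def by simp
qed

lemma W_upd: "j \<in> {1..n} \<Longrightarrow> W (x(j := t)) \<sigma> \<le> exp (\<beta> * \<bar>t - x j\<bar>) * W x \<sigma>"
proof -
  assume j: "j \<in> {1..n}"
  let ?s = "\<lambda>x. (\<Sum>k\<in>{1..n}. (\<beta> * x k + h) * renewal_delta T k \<sigma>)"
  have "?s (x(j := t)) = ?s x + \<beta> * (t - x j) * renewal_delta T j \<sigma>"
  proof -
    have "?s (x(j := t)) = (\<beta> * t + h) * renewal_delta T j \<sigma> + (\<Sum>k\<in>{1..n} - {j}. (\<beta> * x k + h) * renewal_delta T k \<sigma>)"
      using j by (subst sum.remove[of _ j]) auto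
    moreover have "?s x = (\<beta> * x j + h) * renewal_delta T j \<sigma> + (\<Sum>k\<in>{1..n} - {j}. (\<beta> * x k + h) * renewal_delta T k \<sigma>)"
      using j by (subst sum.remove[of _ j]) auto
    ultimately show ?thesis by (simp add: algebra_simps)
  qed
  moreover have "\<beta> * (t - x j) * renewal_delta T j \<sigma> \<le> \<beta> * \<bar>t - x j\<bar>"
    using delta01[of j \<sigma>] beta by (auto simp: mult_left_mono)
  ultimately have "?s (x(j := t)) \<le> ?s x + \<beta> * \<bar>t - x j\<bar>" by simp
  then have "exp (?s (x(j := t))) \<le> exp (\<beta> * \<bar>t - x j\<bar>) * exp (?s x)"
    by (simp add: exp_add[symmetric] add.commute)
  then have "exp (?s (x(j := t))) * renewal_delta T n \<sigma> \<le> exp (\<beta> * \<bar>t - x j\<bar>) * exp (?s x) * renewal_delta T n \<sigma>"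
    by (rule mult_right_mono) simp
  then show ?thesis unfolding W_def by (simp add: mult.assoc)
qed

lemma Zf_upd: "j \<in> {1..n} \<Longrightarrow> Zf (x(j := t)) \<le> exp (\<beta> * \<bar>t - x j\<bar>) * Zf x"
  unfolding Zf_def
  by (subst integral_mult_right_zero[symmetric], rule integral_mono) (auto simp: W_int W_upd)

lemma L_lip: "j \<in> {1..n} \<Longrightarrow> \<bar>L (x(j := t)) - L x\<bar> \<le> \<beta> * \<bar>t - x j\<bar>"
proof -
  assume j: "j \<in> {1..n}"
  have "ln (Zf (x(j := t))) \<le> ln (exp (\<beta> * \<bar>t - x j\<bar>) * Zf x)"
    using Zf_upd[OF j, of x t] Zf_pos[of x] Zf_pos[of "x(j:=t)"] by (subst ln_le_cancel_iff) auto
  then have 1: "L (x(j := t)) \<le> \<beta> * \<bar>t - x j\<bar> + L x"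
    unfolding L_def using Zf_pos[of x] by (simp add: ln_mult)
  have "Zf ((x(j := t))(j := x j)) \<le> exp (\<beta> * \<bar>x j - t\<bar>) * Zf (x(j := t))"
    using Zf_upd[OF j, of "x(j:=t)" "x j"] by simp
  then have "Zf x \<le> exp (\<beta> * \<bar>t - x j\<bar>) * Zf (x(j := t))" by (simp add: abs_minus_commute)
  then have "ln (Zf x) \<le> ln (exp (\<beta> * \<bar>t - x j\<bar>) * Zf (x(j := t)))"
    using Zf_pos[of x] Zf_pos[of "x(j:=t)"] by (subst ln_le_cancel_iff) auto
  then have 2: "L x \<le> \<beta> * \<bar>t - x j\<bar> + L (x(j := t))"
    unfolding L_def using Zf_pos[of "x(j:=t)"] by (simp add: ln_mult)
  from 1 2 show ?thesis by linarith
qed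

lemma L_meas:
  assumes [measurable]: "\<And>k. k \<in> {1..n} \<Longrightarrow> (\<lambda>\<omega>. f \<omega> k) \<in> borel_measurable M"
  shows "(\<lambda>\<omega>. L (f \<omega>)) \<in> borel_measurable M"
proof -
  interpret sigma_finite_measure P by (rule prob_space_imp_sigma_finite) (rule prob_space_axioms)
  have "(\<lambda>(\<omega>, \<sigma>). W (f \<omega>) \<sigma>) \<in> borel_measurable (M \<Otimes>\<^sub>M P)"
    unfolding W_def by measurable
  then have "(\<lambda>\<omega>. Zf (f \<omega>)) \<in> borel_measurable M"
    unfolding Zf_def by (rule borel_measurable_lebesgue_integral[OF _]) 
  then show ?thesis unfolding L_def by measurable
qed

end



locale both = Qd: dis Q \<eta> + Pp: poly P T \<beta> h n
  for Q :: "'w measure" and \<eta> and P :: "'s measure" and T \<beta> h n +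
  assumes mom: "integrable Q (\<lambda>\<omega>. exp (\<beta> * \<bar>\<eta> 0 \<omega>\<bar>))"
begin

abbreviation "\<mu> \<equiv> Qd.\<mu>"
abbreviation "L \<equiv> Pp.L"
abbreviation "MM S \<equiv> PiM S (\<lambda>_::nat. \<mu>)"

lemma int_mu_iff: fixes f :: "real \<Rightarrow> real" assumes "f \<in> borel_measurable borel" shows "integrable \<mu> f \<longleftrightarrow> integrable Q (\<lambda>\<omega>. f (\<eta> 0 \<omega>))"
  unfolding Qd.\<mu>_def by (rule integrable_distr_eq[OF Qd.eta_meas assms])

lemma integral_mu: fixes f :: "real \<Rightarrow> real" assumes "f \<in> borel_measurable borel" shows "(\<integral>t. f t \<partial>\<mu>) = (\<integral>\<omega>. f (\<eta> 0 \<omega>) \<partial>Q)"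
  unfolding Qd.\<mu>_def by (rule integral_distr[OF Qd.eta_meas assms])

lemma int_expabs: "integrable \<mu> (\<lambda>t. exp (\<beta> * \<bar>t\<bar>))"
  using mom by (subst int_mu_iff) auto

interpretation MU: prob_space \<mu> by (rule Qd.prob_mu)

lemma int_bound_mu:
  fixes f :: "real \<Rightarrow> real"
  assumes "f \<in> borel_measurable borel" "\<And>t. \<bar>f t\<bar> \<le> c * exp (\<beta> * \<bar>t\<bar>) + d"
  shows "integrable \<mu> f"
proof (rule Bochner_Integration.integrable_bound[where f="\<lambda>t. c * exp (\<beta> * \<bar>t\<bar>) + d"])
  show "integrable \<mu> (\<lambda>t. c * exp (\<beta> * \<bar>t\<bar>) + d)"
    by (intro Bochner_Integration.integrable_add integrable_mult_right int_expabs MU.integrable_const)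
  show "f \<in> borel_measurable \<mu>" using assms(1) by simp
  show "AE t in \<mu>. norm (f t) \<le> norm (c * exp (\<beta> * \<bar>t\<bar>) + d)"
    by (rule AE_I2) (simp only: real_norm_def, rule order_trans[OF assms(2) abs_ge_self])
qed

lemma int_abs: "integrable \<mu> (\<lambda>t. \<bar>t\<bar>)"
proof (rule int_bound_mu[where c="1/\<beta>" and d=0])
  fix t :: real
  have "\<beta> * \<bar>t\<bar> \<le> exp (\<beta> * \<bar>t\<bar>)"
    using exp_ge_add_one_self[of "\<beta> * \<bar>t\<bar>"] by linarith
  then show "\<bar>\<bar>t\<bar>\<bar> \<le> 1 / \<beta> * exp (\<beta> * \<bar>t\<bar>) + 0"
    using Pp.beta by (simp add: field_simps)
qed simp

lemma bt_le: "\<beta> * t \<le> \<beta> * \<bar>t\<bar>" "- (\<beta> * t) \<le> \<beta> * \<bar>t\<bar>"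
proof -
  show "\<beta> * t \<le> \<beta> * \<bar>t\<bar>" by (rule mult_left_mono) (use Pp.beta in auto)
  have "\<beta> * (- t) \<le> \<beta> * \<bar>t\<bar>" by (rule mult_left_mono) (use Pp.beta in auto)
  then show "- (\<beta> * t) \<le> \<beta> * \<bar>t\<bar>" by simp
qed

lemma int_exp_pos: "integrable \<mu> (\<lambda>t. exp (\<beta> * t))"
  by (rule int_bound_mu[where c=1 and d=0]) (use bt_le in auto)

lemma int_exp_neg: "integrable \<mu> (\<lambda>t. exp (- (\<beta> * t)))"
  by (rule int_bound_mu[where c=1 and d=0]) (use bt_le in auto)

lemma comp_int:
  fixes f :: "real \<Rightarrow> real" and k :: nat
  assumes S: "k \<in> S" and f: "integrable \<mu> f"
  shows "integrable (MM S) (\<lambda>y. f (y k))" and "(\<integral>y. f (y k) \<partial>MM S) = (\<integral>t. f t \<partial>\<mu>)"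
proof -
  interpret product_prob_space "\<lambda>_::nat. \<mu>" S by (rule Qd.PP)
  have d: "distr (MM S) \<mu> (\<lambda>\<omega>. \<omega> k) = \<mu>" by (rule PiM_component[OF S])
  have m: "(\<lambda>\<omega>. \<omega> k) \<in> measurable (MM S) \<mu>" by (rule measurable_component_singleton[OF S])
  have fm: "f \<in> borel_measurable \<mu>" using f by auto
  show "integrable (MM S) (\<lambda>y. f (y k))"
    using f by (subst (asm) d[symmetric]) (simp add: integrable_distr_eq[OF m fm])
  show "(\<integral>y. f (y k) \<partial>MM S) = (\<integral>t. f t \<partial>\<mu>)"
    by (subst d[symmetric]) (simp add: integral_distr[OF m fm])
qed

lemma G_int:
  fixes f :: "(nat \<Rightarrow> real) \<Rightarrow> real"
  assumes S: "finite S" and fm: "f \<in> borel_measurable (MM S)"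
    and b: "\<And>y. y \<in> space (MM S) \<Longrightarrow> \<bar>f y\<bar> \<le> c + a * (\<Sum>k\<in>S. \<bar>y k\<bar>)"
  shows "integrable (MM S) f"
proof -
  interpret MS: prob_space "MM S" by (rule Qd.prob_MM)
  have "integrable (MM S) (\<lambda>y. c + a * (\<Sum>k\<in>S. \<bar>y k\<bar>))"
    using comp_int(1)[OF _ int_abs]
    by (intro Bochner_Integration.integrable_add integrable_mult_right MS.integrable_const
          Bochner_Integration.integrable_sum) auto
  then show ?thesis
  proof (rule Bochner_Integration.integrable_bound[OF _ fm])
    show "AE y in MM S. norm (f y) \<le> norm (c + a * (\<Sum>k\<in>S. \<bar>y k\<bar>))"
      by (rule AE_I2) (simp only: real_norm_def, rule order_trans[OF b abs_ge_self])
  qed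
qed

lemma merge_comp_meas:
  assumes "k \<in> I \<union> J"
  shows "(\<lambda>y. merge I J (a, y) k) \<in> borel_measurable (MM J)"
proof (cases "k \<in> I")
  case True then show ?thesis by (simp add: merge_def)
next
  case False
  then have k: "k \<in> J" using assms by auto
  have "(\<lambda>y. y k) \<in> borel_measurable (MM J)"
    using measurable_component_singleton[OF k, of "\<lambda>_. \<mu>"]
    by (simp add: measurable_cong_sets[OF refl Qd.sets_mu])
  then show ?thesis using False k by (simp add: merge_def)
qed

lemma L_bound: "\<bar>L z\<bar> \<le> \<beta> * (\<Sum>k\<in>{1..n}. \<bar>z k\<bar>) + real n * \<bar>h\<bar> - ln Pp.pp"
proof -
  have "Pp.cc z \<le> (\<Sum>k\<in>{1..n}. \<beta> * \<bar>z k\<bar> + \<bar>h\<bar>)" by (rule Pp.cc_le)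
  also have "\<dots> = \<beta> * (\<Sum>k\<in>{1..n}. \<bar>z k\<bar>) + real n * \<bar>h\<bar>"
    by (simp add: sum.distrib sum_distrib_left)
  finally show ?thesis using Pp.L_abs[of z] by linarith
qed

lemma Lmerge_int:
  assumes disj: "I \<inter> J = {}" and IJ: "I \<union> J = {1..n}"
  shows "integrable (MM J) (\<lambda>y. L (merge I J (a, y)))"
proof (rule G_int)
  have fin: "finite I" "finite J" using IJ by (metis finite_Un finite_atLeastAtMost)+
  show "finite J" by (rule fin)
  show "(\<lambda>y. L (merge I J (a, y))) \<in> borel_measurable (MM J)"
    by (rule Pp.L_meas) (rule merge_comp_meas, use IJ in auto)
  fix y
  have "(\<Sum>k\<in>{1..n}. \<bar>merge I J (a, y) k\<bar>) = (\<Sum>k\<in>I. \<bar>merge I J (a, y) k\<bar>) + (\<Sum>k\<in>J. \<bar>merge I J (a, y) k\<bar>)"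
    unfolding IJ[symmetric] by (rule sum.union_disjoint[OF fin disj])
  also have "\<dots> = (\<Sum>k\<in>I. \<bar>a k\<bar>) + (\<Sum>k\<in>J. \<bar>y k\<bar>)"
    using disj by (auto intro!: sum.cong arg_cong2[where f="(+)"])
  finally have eq: "(\<Sum>k\<in>{1..n}. \<bar>merge I J (a, y) k\<bar>) = (\<Sum>k\<in>I. \<bar>a k\<bar>) + (\<Sum>k\<in>J. \<bar>y k\<bar>)" .
  show "\<bar>L (merge I J (a, y))\<bar> \<le> (\<beta> * (\<Sum>k\<in>I. \<bar>a k\<bar>) + real n * \<bar>h\<bar> - ln Pp.pp) + \<beta> * (\<Sum>k\<in>J. \<bar>y k\<bar>)"
    using L_bound[of "merge I J (a, y)"] unfolding eq by (simp add: distrib_left)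
qed

lemma Lupd_int:
  assumes j: "j \<in> {1..n}"
  shows "integrable \<mu> (\<lambda>t. L (z(j := t)))"
proof (rule Bochner_Integration.integrable_bound[where f="\<lambda>t. \<bar>L z\<bar> + \<beta> * \<bar>z j\<bar> + \<beta> * \<bar>t\<bar>"])
  show "integrable \<mu> (\<lambda>t. \<bar>L z\<bar> + \<beta> * \<bar>z j\<bar> + \<beta> * \<bar>t\<bar>)"
    by (intro Bochner_Integration.integrable_add integrable_mult_right MU.integrable_const int_abs)
  show "(\<lambda>t. L (z(j := t))) \<in> borel_measurable \<mu>"
    by (rule Pp.L_meas) (simp add: measurable_cong_sets[OF Qd.sets_mu refl])
  show "AE t in \<mu>. norm (L (z(j := t))) \<le> norm (\<bar>L z\<bar> + \<beta> * \<bar>z j\<bar> + \<beta> * \<bar>t\<bar>)"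
  proof (rule AE_I2)
    fix t
    have "\<bar>L (z(j := t))\<bar> \<le> \<bar>L z\<bar> + \<beta> * \<bar>t - z j\<bar>" using Pp.L_lip[OF j, of z t] by linarith
    also have "\<beta> * \<bar>t - z j\<bar> \<le> \<beta> * (\<bar>z j\<bar> + \<bar>t\<bar>)"
      using Pp.beta by (intro mult_left_mono) auto
    finally show "norm (L (z(j := t))) \<le> norm (\<bar>L z\<bar> + \<beta> * \<bar>z j\<bar> + \<beta> * \<bar>t\<bar>)"
      using Pp.beta by (simp add: distrib_left)
  qed
qed

definition "phi s = (\<integral>t. \<beta> * \<bar>s - t\<bar> \<partial>\<mu>)"
definition "psi s = (\<integral>t. exp (\<beta> * \<bar>s - t\<bar>) \<partial>\<mu>)"

lemma abs_diff_le: "\<beta> * \<bar>s - t\<bar> \<le> \<beta> * \<bar>s\<bar> + \<beta> * \<bar>t\<bar>"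
proof -
  have "\<beta> * \<bar>s - t\<bar> \<le> \<beta> * (\<bar>s\<bar> + \<bar>t\<bar>)" using Pp.beta by (intro mult_left_mono) auto
  then show ?thesis by (simp add: distrib_left)
qed

lemma phi_int: "integrable \<mu> (\<lambda>t. \<beta> * \<bar>s - t\<bar>)"
proof (rule int_bound_mu[where c=1 and d="\<beta> * \<bar>s\<bar>"])
  fix t
  have "\<beta> * \<bar>t\<bar> \<le> exp (\<beta> * \<bar>t\<bar>)"
    using exp_ge_add_one_self[of "\<beta> * \<bar>t\<bar>"] by linarith
  then show "\<bar>\<beta> * \<bar>s - t\<bar>\<bar> \<le> 1 * exp (\<beta> * \<bar>t\<bar>) + \<beta> * \<bar>s\<bar>"
    using abs_diff_le[of s t] Pp.beta by simp
qed simp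

lemma psi_int: "integrable \<mu> (\<lambda>t. exp (\<beta> * \<bar>s - t\<bar>))"
proof (rule int_bound_mu[where c="exp (\<beta> * \<bar>s\<bar>)" and d=0])
  fix t
  have "exp (\<beta> * \<bar>s - t\<bar>) \<le> exp (\<beta> * \<bar>s\<bar> + \<beta> * \<bar>t\<bar>)"
    using abs_diff_le[of s t] by simp
  then show "\<bar>exp (\<beta> * \<bar>s - t\<bar>)\<bar> \<le> exp (\<beta> * \<bar>s\<bar>) * exp (\<beta> * \<bar>t\<bar>) + 0"
    by (simp add: exp_add)
qed simp

lemma KL:
  assumes j: "j \<in> {1..n}" and ab: "\<And>k. k \<in> {1..j-1} \<Longrightarrow> b k = a k"
  shows "\<bar>(\<integral>y. L (merge {1..j} {Suc j..n} (a, y)) \<partial>MM {Suc j..n}) -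
          (\<integral>y. L (merge {1..j-1} {j..n} (b, y)) \<partial>MM {j..n})\<bar> \<le> phi (a j)"
proof -
  define I1 where "I1 = {1..j}"
  define J1 where "J1 = {Suc j..n}"
  define I0 where "I0 = {1..j-1}"
  define J0 where "J0 = {j..n}"
  have J0: "J0 = insert j J1" and jJ1: "j \<notin> J1" and finJ1: "finite J1"
    using j by (auto simp: J0_def J1_def)
  have d1: "I1 \<inter> J1 = {}" "I1 \<union> J1 = {1..n}" using j by (auto simp: I1_def J1_def)
  have d0: "I0 \<inter> J0 = {}" "I0 \<union> J0 = {1..n}" using j by (auto simp: I0_def J0_def)
  interpret MS: prob_space "MM J1" by (rule Qd.prob_MM)
  define z where "z y = merge I1 J1 (a, y)" for y
  have zj: "z y j = a j" for y using j by (simp add: z_def I1_def J1_def merge_def)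
  define G where "G y = (\<integral>t. L ((z y)(j := t)) \<partial>\<mu>)" for y
  have Lz_int: "integrable (MM J1) (\<lambda>y. L (z y))"
    unfolding z_def by (rule Lmerge_int[OF d1])
  have H0: "(\<integral>y. L (merge I0 J0 (b, y)) \<partial>MM J0) = (\<integral>y. G y \<partial>MM J1)"
  proof -
    have "(\<integral>y. L (merge I0 J0 (b, y)) \<partial>MM J0) =
          (\<integral>y. (\<integral>t. L (merge I0 J0 (b, y(j := t))) \<partial>\<mu>) \<partial>MM J1)"
      unfolding J0 by (rule Qd.PS.product_integral_insert[OF finJ1 jJ1]) (use Lmerge_int[OF d0] J0 in simp)
    also have "\<dots> = (\<integral>y. G y \<partial>MM J1)"
    proof (rule Bochner_Integration.integral_cong[OF refl])
      fix y
      have "L (merge I0 J0 (b, y(j := t))) = L ((z y)(j := t))" for t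
      proof (rule Pp.L_local)
        fix k assume k: "k \<in> {1..n}"
        show "merge I0 J0 (b, y(j := t)) k = ((z y)(j := t)) k"
          using k j ab by (auto simp: z_def merge_def I0_def J0_def I1_def J1_def)
      qed
      then show "(\<integral>t. L (merge I0 J0 (b, y(j := t))) \<partial>\<mu>) = G y" by (simp add: G_def)
    qed
    finally show ?thesis .
  qed
  define D where "D y = L (z y) - G y" for y
  have Dbound: "\<bar>D y\<bar> \<le> phi (a j)" for y
  proof -
    have int1: "integrable \<mu> (\<lambda>t. L ((z y)(j := t)))" by (rule Lupd_int[OF j])
    have p1: "measure \<mu> UNIV = 1" using MU.prob_space by simp
    have "(\<integral>t. L (z y) - L ((z y)(j := t)) \<partial>\<mu>) = (\<integral>t. L (z y) \<partial>\<mu>) - G y"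
      unfolding G_def by (rule Bochner_Integration.integral_diff[OF MU.integrable_const int1])
    also have "(\<integral>t. L (z y) \<partial>\<mu>) = L (z y)" by (simp add: p1)
    finally have "(\<integral>t. L (z y) - L ((z y)(j := t)) \<partial>\<mu>) = L (z y) - G y" .
    then have Deq: "D y = (\<integral>t. L (z y) - L ((z y)(j := t)) \<partial>\<mu>)"
      unfolding D_def by (rule sym)
    have "\<bar>\<integral>t. L (z y) - L ((z y)(j := t)) \<partial>\<mu>\<bar> \<le> (\<integral>t. \<bar>L (z y) - L ((z y)(j := t))\<bar> \<partial>\<mu>)" by (rule integral_abs_bound)
    also have "\<dots> \<le> (\<integral>t. \<beta> * \<bar>a j - t\<bar> \<partial>\<mu>)"
    proof (rule integral_mono)
      show "integrable \<mu> (\<lambda>t. \<bar>L (z y) - L ((z y)(j := t))\<bar>)"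
        by (intro integrable_abs Bochner_Integration.integrable_diff MU.integrable_const int1)
      show "integrable \<mu> (\<lambda>t. \<beta> * \<bar>a j - t\<bar>)" by (rule phi_int)
      fix t
      show "\<bar>L (z y) - L ((z y)(j := t))\<bar> \<le> \<beta> * \<bar>a j - t\<bar>"
      proof -
        have "\<bar>L ((z y)(j := t)) - L (z y)\<bar> \<le> \<beta> * \<bar>t - z y j\<bar>" by (rule Pp.L_lip[OF j])
        then show ?thesis unfolding zj by (metis abs_minus_commute)
      qed
    qed
    finally show ?thesis unfolding phi_def Deq .
  qed
  have comp_meas: "(\<lambda>p. ((z (fst p))(j := snd p)) k) \<in> borel_measurable (MM J1 \<Otimes>\<^sub>M \<mu>)" if k: "k \<in> {1..n}" for k
  proof (cases "k = j")
    case True then show ?thesis by (simp add: measurable_cong_sets[OF refl Qd.sets_mu])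
  next
    case False
    have "(\<lambda>y. z y k) \<in> borel_measurable (MM J1)"
      unfolding z_def by (rule merge_comp_meas) (use k d1 in auto)
    then show ?thesis using False by simp
  qed
  have G_meas: "G \<in> borel_measurable (MM J1)"
  proof -
    have "(\<lambda>p. L ((z (fst p))(j := snd p))) \<in> borel_measurable (MM J1 \<Otimes>\<^sub>M \<mu>)"
      by (rule Pp.L_meas) (rule comp_meas)
    then have "(\<lambda>(y, t). L ((z y)(j := t))) \<in> borel_measurable (MM J1 \<Otimes>\<^sub>M \<mu>)"
      by (simp add: case_prod_beta')
    then show ?thesis unfolding G_def by (rule sigma_finite_measure.borel_measurable_lebesgue_integral[OF prob_space_imp_sigma_finite[OF Qd.prob_mu]])
  qed
  have D_int: "integrable (MM J1) D"
  proof (rule MS.integrable_const_bound[where B="phi (a j)"])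
    show "AE y in MM J1. norm (D y) \<le> phi (a j)" using Dbound by simp
    show "D \<in> borel_measurable (MM J1)" unfolding D_def using Lz_int G_meas by auto
  qed
  have G_eq: "G = (\<lambda>y. L (z y) - D y)" by (simp add: D_def fun_eq_iff)
  have "(\<integral>y. L (z y) \<partial>MM J1) - (\<integral>y. G y \<partial>MM J1) = (\<integral>y. D y \<partial>MM J1)"
    unfolding G_eq using Lz_int D_int by (simp add: Bochner_Integration.integral_diff)
  moreover have "\<bar>\<integral>y. D y \<partial>MM J1\<bar> \<le> phi (a j)"
  proof -
    have "\<bar>\<integral>y. D y \<partial>MM J1\<bar> \<le> (\<integral>y. \<bar>D y\<bar> \<partial>MM J1)" by (rule integral_abs_bound)
    also have "\<dots> \<le> (\<integral>y. phi (a j) \<partial>MM J1)"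
      by (rule integral_mono) (use D_int Dbound in auto)
    also have "\<dots> = phi (a j)" by (simp add: MS.prob_space)
    finally show ?thesis .
  qed
  ultimately show ?thesis using H0 unfolding z_def I1_def J1_def I0_def J0_def by simp
qed

definition "mp = (\<integral>t. exp (\<beta> * t) \<partial>\<mu>)"
definition "mm = (\<integral>t. exp (- (\<beta> * t)) \<partial>\<mu>)"

lemma mp_pos: "mp > 0" unfolding mp_def
  by (rule MU.expectation_greater) (auto simp: int_exp_pos)
lemma mm_pos: "mm > 0" unfolding mm_def
  by (rule MU.expectation_greater) (auto simp: int_exp_neg)

lemma psi_meas: "psi \<in> borel_measurable borel"
proof -
  have "(\<lambda>p. exp (\<beta> * \<bar>fst p - snd p\<bar>)) \<in> borel_measurable (borel \<Otimes>\<^sub>M \<mu>)"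
    by measurable
  then have "(\<lambda>(s, t). exp (\<beta> * \<bar>s - t\<bar>)) \<in> borel_measurable (borel \<Otimes>\<^sub>M \<mu>)"
    by (simp add: case_prod_beta')
  then show ?thesis unfolding psi_def
    by (rule sigma_finite_measure.borel_measurable_lebesgue_integral[OF prob_space_imp_sigma_finite[OF Qd.prob_mu]])
qed

lemma exp_abs_le: "exp (\<beta> * \<bar>s - t\<bar>) \<le> exp (\<beta> * s) * exp (- (\<beta> * t)) + exp (- (\<beta> * s)) * exp (\<beta> * t)"
proof (cases "s \<ge> t")
  case True
  then have "exp (\<beta> * \<bar>s - t\<bar>) = exp (\<beta> * s) * exp (- (\<beta> * t))"
    by (simp add: exp_add[symmetric] algebra_simps)
  then show ?thesis by (simp add: add_increasing2)
next
  case False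
  then have "exp (\<beta> * \<bar>s - t\<bar>) = exp (- (\<beta> * s)) * exp (\<beta> * t)"
    by (simp add: exp_add[symmetric] algebra_simps)
  then show ?thesis by (simp add: add_increasing)
qed

lemma psi_le: "psi s \<le> exp (\<beta> * s) * mm + exp (- (\<beta> * s)) * mp"
proof -
  have "psi s \<le> (\<integral>t. exp (\<beta> * s) * exp (- (\<beta> * t)) + exp (- (\<beta> * s)) * exp (\<beta> * t) \<partial>\<mu>)"
    unfolding psi_def
    by (rule integral_mono[OF psi_int]) (use int_exp_pos int_exp_neg exp_abs_le in auto)
  also have "\<dots> = exp (\<beta> * s) * mm + exp (- (\<beta> * s)) * mp"
    unfolding mm_def mp_def
    by (subst Bochner_Integration.integral_add) (use int_exp_pos int_exp_neg in auto)
  finally show ?thesis .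
qed

lemma psi_nonneg: "psi s \<ge> 0" unfolding psi_def by simp

lemma psi_intg: "integrable \<mu> psi"
proof (rule Bochner_Integration.integrable_bound[where f="\<lambda>s. exp (\<beta> * s) * mm + exp (- (\<beta> * s)) * mp"])
  show "integrable \<mu> (\<lambda>s. exp (\<beta> * s) * mm + exp (- (\<beta> * s)) * mp)"
    using int_exp_pos int_exp_neg by auto
  show "psi \<in> borel_measurable \<mu>" using psi_meas by simp
  show "AE s in \<mu>. norm (psi s) \<le> norm (exp (\<beta> * s) * mm + exp (- (\<beta> * s)) * mp)"
  proof (rule AE_I2)
    fix s
    have "0 \<le> exp (\<beta> * s) * mm + exp (- (\<beta> * s)) * mp" using mp_pos mm_pos by simp
    then show "norm (psi s) \<le> norm (exp (\<beta> * s) * mm + exp (- (\<beta> * s)) * mp)"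
      using psi_le[of s] psi_nonneg[of s] by simp
  qed
qed

lemma psi_integral: "(\<integral>s. psi s \<partial>\<mu>) \<le> 2 * mp * mm"
proof -
  have "(\<integral>s. psi s \<partial>\<mu>) \<le> (\<integral>s. exp (\<beta> * s) * mm + exp (- (\<beta> * s)) * mp \<partial>\<mu>)"
    by (rule integral_mono[OF psi_intg]) (use int_exp_pos int_exp_neg psi_le in auto)
  also have "\<dots> = mp * mm + mm * mp"
    unfolding mm_def mp_def
    by (subst Bochner_Integration.integral_add) (use int_exp_pos int_exp_neg in auto)
  finally show ?thesis by (simp add: algebra_simps)
qed

lemma jensen: "exp (phi s) \<le> psi s"
  unfolding phi_def psi_def
  apply (rule MU.jensens_inequality[where I=UNIV])
      apply (rule phi_int)
     apply simp
    apply simp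
   apply (rule psi_int)
  apply (rule exp_convex)
  done

lemma L_int: "integrable (MM {1..n}) L"
proof -
  have "integrable (MM {1..n}) (\<lambda>y. L (merge {} {1..n} (undefined, y)))"
    by (rule Lmerge_int) auto
  moreover have "L (merge {} {1..n} (undefined, y)) = L y" for y
    by (rule Pp.L_local) (simp add: merge_def)
  ultimately show ?thesis by simp
qed

lemma main:
  assumes j: "j \<in> {1..n}"
  shows "AE \<omega> in Q. real_cond_exp Q (disorder_filtration Q \<eta> (j - 1))
     (\<lambda>\<omega>. exp \<bar>real_cond_exp Q (disorder_filtration Q \<eta> j) (\<lambda>\<omega>. L (Qd.YY {1..n} \<omega>)) \<omega>
               - real_cond_exp Q (disorder_filtration Q \<eta> (j - 1)) (\<lambda>\<omega>. L (Qd.YY {1..n} \<omega>)) \<omega>\<bar>) \<omega>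
     \<le> 2 * mp * mm"
proof -
  let ?lnZ = "\<lambda>\<omega>. L (Qd.YY {1..n} \<omega>)"
  let ?F = "disorder_filtration Q \<eta>"
  have jn: "j \<le> n" "j - 1 \<le> n" "1 \<le> j" using j by auto
  have sj: "Suc (j - 1) = j" using jn by simp
  define H1 where "H1 \<omega> = (\<integral>y. L (merge {1..j} {Suc j..n} (Qd.YY {1..j} \<omega>, y)) \<partial>MM {Suc j..n})" for \<omega>
  define H0 where "H0 \<omega> = (\<integral>y. L (merge {1..j-1} {j..n} (Qd.YY {1..j-1} \<omega>, y)) \<partial>MM {j..n})" for \<omega>
  have A1: "AE \<omega> in Q. real_cond_exp Q (?F j) ?lnZ \<omega> = H1 \<omega>"
    using Qd.condexp[OF jn(1) L_int] unfolding H1_def .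
  have A0: "AE \<omega> in Q. real_cond_exp Q (?F (j - 1)) ?lnZ \<omega> = H0 \<omega>"
    using Qd.condexp[OF jn(2) L_int] unfolding H0_def sj .
  have K: "\<bar>H1 \<omega> - H0 \<omega>\<bar> \<le> phi (\<eta> j \<omega>)" for \<omega>
  proof -
    have "\<bar>H1 \<omega> - H0 \<omega>\<bar> \<le> phi (Qd.YY {1..j} \<omega> j)"
      unfolding H1_def H0_def by (rule KL[OF j]) (auto simp: Qd.YY_def)
    then show ?thesis using jn by (simp add: Qd.YY_def)
  qed
  define V where "V \<omega> = real_cond_exp Q (?F j) ?lnZ \<omega> - real_cond_exp Q (?F (j - 1)) ?lnZ \<omega>" for \<omega>
  have Vb: "AE \<omega> in Q. exp \<bar>V \<omega>\<bar> \<le> psi (\<eta> j \<omega>)"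
    using A1 A0
  proof eventually_elim
    case (elim \<omega>)
    then have "\<bar>V \<omega>\<bar> \<le> phi (\<eta> j \<omega>)" unfolding V_def using K[of \<omega>] by simp
    then have "exp \<bar>V \<omega>\<bar> \<le> exp (phi (\<eta> j \<omega>))" by simp
    also have "\<dots> \<le> psi (\<eta> j \<omega>)" by (rule jensen)
    finally show ?case .
  qed
  have int_psi: "integrable Q (\<lambda>\<omega>. psi (\<eta> j \<omega>))"
    using psi_intg unfolding Qd.distr_eta[of j, symmetric]
    by (simp add: integrable_distr_eq[OF Qd.eta_meas psi_meas])
  have V_meas: "V \<in> borel_measurable Q" unfolding V_def by measurable
  have int_V: "integrable Q (\<lambda>\<omega>. exp \<bar>V \<omega>\<bar>)"
  proof (rule Bochner_Integration.integrable_bound[OF int_psi])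
    show "(\<lambda>\<omega>. exp \<bar>V \<omega>\<bar>) \<in> borel_measurable Q" using V_meas by measurable
    show "AE \<omega> in Q. norm (exp \<bar>V \<omega>\<bar>) \<le> norm (psi (\<eta> j \<omega>))"
      using Vb by eventually_elim (use psi_nonneg in simp)
  qed
  interpret FM: finite_measure_subalgebra Q "?F (j - 1)" by (rule Qd.fms_FF)
  have mono: "AE \<omega> in Q. real_cond_exp Q (?F (j - 1)) (\<lambda>\<omega>. exp \<bar>V \<omega>\<bar>) \<omega>
                \<le> real_cond_exp Q (?F (j - 1)) (\<lambda>\<omega>. psi (\<eta> j \<omega>)) \<omega>"
    by (rule FM.real_cond_exp_mono[OF Vb int_V int_psi])
  define g where "g x = psi (x j)" for x :: "nat \<Rightarrow> real"
  have jN: "j \<in> {1..n}" by (rule j)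
  have g_int: "integrable (MM {1..n}) g" unfolding g_def by (rule comp_int(1)[OF jN psi_intg])
  have gY: "(\<lambda>\<omega>. g (Qd.YY {1..n} \<omega>)) = (\<lambda>\<omega>. psi (\<eta> j \<omega>))"
    using jN by (simp add: g_def Qd.YY_def fun_eq_iff)
  have rhs: "(\<integral>y. g (merge {1..j-1} {j..n} (Qd.YY {1..j-1} \<omega>, y)) \<partial>MM {j..n}) = (\<integral>s. psi s \<partial>\<mu>)" for \<omega>
  proof -
    have "(\<integral>y. g (merge {1..j-1} {j..n} (Qd.YY {1..j-1} \<omega>, y)) \<partial>MM {j..n}) = (\<integral>y. psi (y j) \<partial>MM {j..n})"
    proof -
      have nj: "\<not> (j \<le> j - Suc 0)" using jn by arith
      show ?thesis using jn nj by (simp add: g_def merge_def)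
    qed
    also have "\<dots> = (\<integral>s. psi s \<partial>\<mu>)" by (rule comp_int(2)[OF _ psi_intg]) (use jn in simp)
    finally show ?thesis .
  qed
  have ce: "AE \<omega> in Q. real_cond_exp Q (?F (j - 1)) (\<lambda>\<omega>. psi (\<eta> j \<omega>)) \<omega> = (\<integral>s. psi s \<partial>\<mu>)"
    using Qd.condexp[OF jn(2) g_int] unfolding gY sj rhs .
  show ?thesis
    using mono ce
  proof eventually_elim
    case (elim \<omega>)
    then show ?case using psi_integral unfolding V_def by simp
  qed
qed

lemma lnZ_eq: "(\<lambda>\<omega>. ln (partition_fn P T \<eta> \<beta> h n \<omega>)) = (\<lambda>\<omega>. L (Qd.YY {1..n} \<omega>))"
proof -
  have s: "(\<Sum>k\<in>{1..n}. (\<beta> * Qd.YY {1..n} \<omega> k + h) * renewal_delta T k \<sigma>) =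
           (\<Sum>k\<in>{1..n}. (\<beta> * \<eta> k \<omega> + h) * renewal_delta T k \<sigma>)" for \<omega> \<sigma>
    by (rule sum.cong) (auto simp: Qd.YY_def)
  show ?thesis
    unfolding partition_fn_def Pp.L_def Pp.Zf_def Pp.W_def s ..
qed

lemma K_bound: "2 * mp * mm \<le> 2 * max (exp (h + log_mgf Q (\<eta> 0) \<beta>)) 1 * max (exp (- h + log_mgf Q (\<eta> 0) (- \<beta>))) 1"
proof -
  have lp: "log_mgf Q (\<eta> 0) \<beta> = ln mp"
    unfolding log_mgf_def mp_def by (subst integral_mu) auto
  have e: "(\<lambda>\<omega>. exp (- \<beta> * \<eta> 0 \<omega>)) = (\<lambda>\<omega>. exp (- (\<beta> * \<eta> 0 \<omega>)))" by simp
  have lm: "log_mgf Q (\<eta> 0) (- \<beta>) = ln mm"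
    unfolding log_mgf_def mm_def e by (subst integral_mu) auto
  define a where "a = exp h * mp"
  define b where "b = exp (- h) * mm"
  have ea: "exp (h + log_mgf Q (\<eta> 0) \<beta>) = a" unfolding lp a_def using mp_pos by (simp add: exp_add)
  have eb: "exp (- h + log_mgf Q (\<eta> 0) (- \<beta>)) = b" unfolding lm b_def using mm_pos
    by (subst exp_add) simp
  have ab: "a * b = mp * mm" unfolding a_def b_def
    by (simp add: algebra_simps exp_minus field_simps)
  have "a * b \<le> max a 1 * max b 1"
    using mp_pos mm_pos unfolding a_def b_def by (intro mult_mono) auto
  then show ?thesis unfolding ea eb using ab by simp
qed

lemma final:
  "\<forall>j\<in>{1..n}.
     (let F = disorder_filtration Q \<eta>;
          lnZ = (\<lambda>\<omega>. ln (partition_fn P T \<eta> \<beta> h n \<omega>));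
          V = (\<lambda>\<omega>. real_cond_exp Q (F j) lnZ \<omega> - real_cond_exp Q (F (j - 1)) lnZ \<omega>);
          K = 2 * max (exp (h + log_mgf Q (\<eta> 0) \<beta>)) 1 * max (exp (- h + log_mgf Q (\<eta> 0) (- \<beta>))) 1
      in AE \<omega> in Q. real_cond_exp Q (F (j - 1)) (\<lambda>\<omega>. exp \<bar>V \<omega>\<bar>) \<omega> \<le> K)"
proof (intro ballI)
  fix j assume j: "j \<in> {1..n}"
  show "let F = disorder_filtration Q \<eta>;
          lnZ = (\<lambda>\<omega>. ln (partition_fn P T \<eta> \<beta> h n \<omega>));
          V = (\<lambda>\<omega>. real_cond_exp Q (F j) lnZ \<omega> - real_cond_exp Q (F (j - 1)) lnZ \<omega>);
          K = 2 * max (exp (h + log_mgf Q (\<eta> 0) \<beta>)) 1 * max (exp (- h + log_mgf Q (\<eta> 0) (- \<beta>))) 1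
      in AE \<omega> in Q. real_cond_exp Q (F (j - 1)) (\<lambda>\<omega>. exp \<bar>V \<omega>\<bar>) \<omega> \<le> K"
    unfolding Let_def lnZ_eq
    using main[OF j] K_bound by (auto elim: eventually_mono)
qed

end

theorem lemma3p1:
  fixes P :: "'s measure" and T :: "nat \<Rightarrow> 's \<Rightarrow> enat"
    and Q :: "'w measure" and \<eta> :: "nat \<Rightarrow> 'w \<Rightarrow> real"
    and \<beta> h :: real and n :: nat
  assumes P: "prob_space P"
    and T_indep: "prob_space.indep_vars P (\<lambda>_. count_space UNIV) T UNIV"
    and T_id: "\<And>i. distr P (count_space UNIV) (T i) = distr P (count_space UNIV) (T 0)"
    and T_pos: "\<And>i. AE \<sigma> in P. T i \<sigma> \<ge> 1"
    and Q: "prob_space Q"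
    and \<eta>_indep: "prob_space.indep_vars Q (\<lambda>_. borel) \<eta> UNIV"
    and \<eta>_id: "\<And>i. distr Q borel (\<eta> i) = distr Q borel (\<eta> 0)"
    and \<beta>: "\<beta> > 0"
    and mom: "integrable Q (\<lambda>\<omega>. exp (\<beta> * \<bar>\<eta> 0 \<omega>\<bar>))"
    and n: "n \<ge> 1"
    and pos: "measure P {\<sigma> \<in> space P. renewal_delta T n \<sigma> = 1} > 0"
  shows "\<forall>j\<in>{1..n}.
     (let F = disorder_filtration Q \<eta>;
          lnZ = (\<lambda>\<omega>. ln (partition_fn P T \<eta> \<beta> h n \<omega>));
          V = (\<lambda>\<omega>. real_cond_exp Q (F j) lnZ \<omega> - real_cond_exp Q (F (j - 1)) lnZ \<omega>);
          K = 2 * max (exp (h + log_mgf Q (\<eta> 0) \<beta>)) 1 * max (exp (- h + log_mgf Q (\<eta> 0) (- \<beta>))) 1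
      in AE \<omega> in Q. real_cond_exp Q (F (j - 1)) (\<lambda>\<omega>. exp \<bar>V \<omega>\<bar>) \<omega> \<le> K)"
proof -
  have D: "dis Q \<eta>"
    unfolding dis_def dis_axioms_def using Q \<eta>_indep \<eta>_id by blast
  have Tm: "\<And>i. T i \<in> measurable P (count_space UNIV)"
    using T_indep unfolding prob_space.indep_vars_def[OF P] by blast
  have PL: "poly P T \<beta> n"
    unfolding poly_def poly_axioms_def using P Tm \<beta> n pos by blast
  have B: "both Q \<eta> P T \<beta> n"
    unfolding both_def both_axioms_def using D PL mom by blast
  show ?thesis by (rule both.final[OF B])
qed

end
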